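(* Let $G$ be a $B_2$-EPG graph given with a representation, let $a$ be a row, and let $Y$ be a nonempty set of vertices whose indices all contain $a$. Suppose the projection graph of $Y$ on $a$ is a clique. Then there is a proper typed interval $t$ on row $a$ such that: (1) every vertex of $Y$ contains $t$; (2) for every vertex $u$ whose index is $\{a\}$ or $\{a,c\}$ where the row $c$ is not in the index of any vertex of $Y$, $u$ is adjacent to every vertex of $Y$ if and only if $u$ intersects $t$.
   Context: A graph $G$ is a $B_k$-EPG graph if each vertex $u$ can be assigned a path $P_u$ in the planar orthogonal grid with at most $k$ bends such that $uv\in E(G)$ iff $P_u$ and $P_v$ share at least one grid edge (a representation); for $B_2$-EPG graphs one assumes w.l.o.g. every path has exactly two bends. A vertex $u$ intersects a row if $P_u$ contains a grid edge of that row; the index of $u$ is the set of rows it intersects. If $a$ is in the index of $u$, $P_u^a$ is the segment of row $a$ between the two points of row $a$ where $P_u$ stops or bends. Types: $\emptyset$, $\mathsf d$, $\mathsf u$. A typed interval on row $a$ is $[x\alpha, y\beta]$ with $\alpha\le\beta$ points of row $a$ and $x,y$ types; it is proper if $\alpha\neq\beta$, or $\alpha=\beta$, $x=y$ and $x\in\{\mathsf u,\mathsf d\}$. For typed intervals $t=[x\alpha,y\beta]$, $t'=[x'\alpha',y'\beta']$ on row $a$ and an endpoint $z\gamma\in\{x'\alpha',y'\beta'\}$ of $t'$, $t$ is coherent with $z\gamma$ if (i) $\gamma\in(\alpha,\beta)$ (open interval), or (ii) $z=\emptyset$ and $[\alpha,\beta]$ contains the grid edge of $[\alpha',\beta']$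 incident to $\gamma$, or (iii) $z\neq\emptyset$ and $z\gamma\in\{x\alpha,y\beta\}$. $t$ contains $t'$ if $[\alpha',\beta']\subseteq[\alpha,\beta]$ and $t$ is coherent with both endpoints of $t'$. $t$ intersects $t'$ if $[\alpha,\beta]\cap[\alpha',\beta']$ contains a grid edge, or $t$ is coherent with an endpoint of $t'$, or $t'$ is coherent with an endpoint of $t$. The t-projection of $u$ on $a$ is $[x\alpha,y\beta]$ where $\alpha,\beta$ are the endpoints of $P_u^a$ and the type of an endpoint $\gamma$ is $\emptyset$ if $P_u$ ends at $\gamma$, $\mathsf d$ if $P_u$ bends downwards at $\gamma$, $\mathsf u$ if upwards. A vertex contains (intersects) a typed interval $t$ on $a$ if its t-projection on $a$ contains (intersects) $t$. The projection graph of a set $Y$ of vertices whose indices contain $a$ is the graph on $Y$ in which $u,v$ are adjacent iff their t-projections on $a$ intersect. *)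

theory Defs
  imports Main
begin

text \<open>Grid points are pairs (x, y) of integers; row y = a is the horizontal line
  of all points (x, a); y increases upwards.\<close>
type_synonym point = "int \<times> int"

text \<open>Grid edges: HE x y joins (x,y) and (x+1,y); VE x y joins (x,y) and (x,y+1).\<close>
datatype gedge = HE int int | VE int int

definition seg_edges :: "point \<Rightarrow> point \<Rightarrow> gedge set" where
  "seg_edges p q =
     (if snd p = snd q then {HE x (snd p) | x. min (fst p) (fst q) \<le> x \<and> x < max (fst p) (fst q)}
      else if fst p = fst q then {VE (fst p) y | y. min (snd p) (snd q) \<le> y \<and> y < max (snd p) (snd q)}
      else {})"

text \<open>A grid path is represented by the list of its corner points: its two end points
  and its bend points, in order.  Its grid edges are those of its maximal straight segments.\<close>
definition path_edges :: "point list \<Rightarrow> gedge set" where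
  "path_edges ps = (\<Union>i < length ps - 1. seg_edges (ps ! i) (ps ! Suc i))"

definition horiz_seg :: "point \<Rightarrow> point \<Rightarrow> bool" where
  "horiz_seg p q \<longleftrightarrow> snd p = snd q \<and> fst p \<noteq> fst q"

definition vert_seg :: "point \<Rightarrow> point \<Rightarrow> bool" where
  "vert_seg p q \<longleftrightarrow> fst p = fst q \<and> snd p \<noteq> snd q"

text \<open>A grid path with exactly two bends: corner list [p0,p1,p2,p3] whose three segments
  are non-degenerate and alternate horizontal/vertical (each bend is a right-angle turn;
  such a path is automatically simple).\<close>
definition two_bend_path :: "point list \<Rightarrow> bool" where
  "two_bend_path ps \<longleftrightarrow> length ps = 4 \<and>
     ((horiz_seg (ps!0) (ps!1) \<and> vert_seg (ps!1) (ps!2) \<and> horiz_seg (ps!2) (ps!3)) \<or>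
      (vert_seg (ps!0) (ps!1) \<and> horiz_seg (ps!1) (ps!2) \<and> vert_seg (ps!2) (ps!3)))"

definition B2_EPG_rep :: "'v set \<Rightarrow> ('v \<Rightarrow> 'v \<Rightarrow> bool) \<Rightarrow> ('v \<Rightarrow> point list) \<Rightarrow> bool" where
  "B2_EPG_rep V E P \<longleftrightarrow>
     (\<forall>u\<in>V. two_bend_path (P u)) \<and>
     (\<forall>u\<in>V. \<forall>v\<in>V. E u v \<longleftrightarrow> u \<noteq> v \<and> path_edges (P u) \<inter> path_edges (P v) \<noteq> {})"

definition index :: "('v \<Rightarrow> point list) \<Rightarrow> 'v \<Rightarrow> int set" where
  "index P u = {a. \<exists>x. HE x a \<in> path_edges (P u)}"

datatype ttype = TEmpty | TDown | TUp

text \<open>A typed interval [x alpha, y beta] on a (fixed) row is ((x, alpha), (y, beta)) with alpha \<le> beta;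
  alpha, beta are the x-coordinates of points of that row.\<close>
type_synonym tint = "(ttype \<times> int) \<times> (ttype \<times> int)"

definition typed_interval :: "tint \<Rightarrow> bool" where
  "typed_interval t \<longleftrightarrow> snd (fst t) \<le> snd (snd t)"

definition proper :: "tint \<Rightarrow> bool" where
  "proper t \<longleftrightarrow> typed_interval t \<and>
     (snd (fst t) \<noteq> snd (snd t) \<or> (fst (fst t) = fst (snd t) \<and> fst (fst t) \<noteq> TEmpty))"

text \<open>Coherence of t with the typed endpoint (z, g) of t' = [x'a', y'b'], where e is the
  grid edge of [a', b'] incident to g, given by its left x-coordinate
  (None if there is no such edge, i.e. a' = b').\<close>
definition coherent_gen :: "tint \<Rightarrow> ttype \<times> int \<Rightarrow> int option \<Rightarrow> bool" where
  "coherent_gen t zg e \<longleftrightarrow>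
     (let (x, \<alpha>) = fst t; (y, \<beta>) = snd t; (z, \<gamma>) = zg in
        (\<alpha> < \<gamma> \<and> \<gamma> < \<beta>) \<or>
        (z = TEmpty \<and> (\<exists>l. e = Some l \<and> \<alpha> \<le> l \<and> l + 1 \<le> \<beta>)) \<or>
        (z \<noteq> TEmpty \<and> (zg = (x, \<alpha>) \<or> zg = (y, \<beta>))))"

definition coherent_left :: "tint \<Rightarrow> tint \<Rightarrow> bool" where
  "coherent_left t t' \<longleftrightarrow> coherent_gen t (fst t')
     (if snd (fst t') < snd (snd t') then Some (snd (fst t')) else None)"

definition coherent_right :: "tint \<Rightarrow> tint \<Rightarrow> bool" where
  "coherent_right t t' \<longleftrightarrow> coherent_gen t (snd t')
     (if snd (fst t') < snd (snd t') then Some (snd (snd t') - 1) else None)"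

definition tcontains :: "tint \<Rightarrow> tint \<Rightarrow> bool" where
  "tcontains t t' \<longleftrightarrow> snd (fst t) \<le> snd (fst t') \<and> snd (snd t') \<le> snd (snd t) \<and>
     coherent_left t t' \<and> coherent_right t t'"

definition tintersects :: "tint \<Rightarrow> tint \<Rightarrow> bool" where
  "tintersects t t' \<longleftrightarrow>
     max (snd (fst t)) (snd (fst t')) + 1 \<le> min (snd (snd t)) (snd (snd t')) \<or>
     coherent_left t t' \<or> coherent_right t t' \<or>
     coherent_left t' t \<or> coherent_right t' t"

text \<open>Type of the corner j of the path, whose neighbouring corner off row a is k:
  empty if the path ends at j, up/down according to the direction of the bend.\<close>
definition corner_type :: "point list \<Rightarrow> nat \<Rightarrow> nat \<Rightarrow> ttype" where
  "corner_type ps j k =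
     (if j = 0 \<or> j = length ps - 1 then TEmpty
      else if snd (ps ! k) > snd (ps ! j) then TUp else TDown)"

definition row_seg :: "point list \<Rightarrow> int \<Rightarrow> nat \<Rightarrow> bool" where
  "row_seg ps a i \<longleftrightarrow> Suc i < length ps \<and> horiz_seg (ps ! i) (ps ! Suc i) \<and> snd (ps ! i) = a"

definition tproj_path :: "point list \<Rightarrow> int \<Rightarrow> tint" where
  "tproj_path ps a =
     (let i = (THE i. row_seg ps a i);
          xa = fst (ps ! i); xb = fst (ps ! Suc i);
          ta = corner_type ps i (i - 1); tb = corner_type ps (Suc i) (Suc (Suc i))
      in if xa \<le> xb then ((ta, xa), (tb, xb)) else ((tb, xb), (ta, xa)))"

definition tproj :: "('v \<Rightarrow> point list) \<Rightarrow> 'v \<Rightarrow> int \<Rightarrow> tint" where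
  "tproj P u a = tproj_path (P u) a"

definition proj_clique :: "('v \<Rightarrow> point list) \<Rightarrow> 'v set \<Rightarrow> int \<Rightarrow> bool" where
  "proj_clique P Y a \<longleftrightarrow> (\<forall>u\<in>Y. \<forall>v\<in>Y. u \<noteq> v \<longrightarrow> tintersects (tproj P u a) (tproj P v a))"

end

theory Submission
  imports Defs
begin


lemma path_edges4: "path_edges [p0,p1,p2,p3] = seg_edges p0 p1 \<union> seg_edges p1 p2 \<union> seg_edges p2 p3"
  unfolding path_edges_def by (auto simp: eval_nat_numeral less_Suc_eq)

lemma seg_h: "seg_edges (x,y) (x',y) = {HE r y | r. min x x' \<le> r \<and> r < max x x'}"
  unfolding seg_edges_def by auto

lemma seg_v: "y \<noteq> y' \<Longrightarrow> seg_edges (x,y) (x,y') = {VE x w | w. min y y' \<le> w \<and> w < max y y'}"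
  unfolding seg_edges_def by auto

lemma len4: "length ps = 4 \<Longrightarrow> \<exists>p0 p1 p2 p3. ps = [p0,p1,p2,p3]"
  by (auto simp: length_Suc_conv eval_nat_numeral)



definition vdir :: "ttype \<Rightarrow> int \<Rightarrow> int \<Rightarrow> bool" where
  "vdir z a w \<longleftrightarrow> (z = TUp \<and> a \<le> w) \<or> (z = TDown \<and> w < a)"

definition good :: "point list \<Rightarrow> int \<Rightarrow> tint \<Rightarrow> bool" where
  "good ps a t \<longleftrightarrow> (snd (fst t) < snd (snd t) \<and>
    (\<forall>r. HE r a \<in> path_edges ps \<longleftrightarrow> snd (fst t) \<le> r \<and> r < snd (snd t)) \<and>
    (\<forall>g w. VE g w \<in> path_edges ps \<longrightarrow> (g = snd (fst t) \<and> vdir (fst (fst t)) a w) \<or> (g = snd (snd t) \<and> vdir (fst (snd t)) a w)) \<and>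
    (fst (fst t) = TUp \<longrightarrow> VE (snd (fst t)) a \<in> path_edges ps) \<and>
    (fst (fst t) = TDown \<longrightarrow> VE (snd (fst t)) (a-1) \<in> path_edges ps) \<and>
    (fst (snd t) = TUp \<longrightarrow> VE (snd (snd t)) a \<in> path_edges ps) \<and>
    (fst (snd t) = TDown \<longrightarrow> VE (snd (snd t)) (a-1) \<in> path_edges ps))"

lemma vhv:
  assumes "y0 \<noteq> y1" "x1 \<noteq> x2" "y1 \<noteq> y3" and ps: "ps = [(x1,y0),(x1,y1),(x2,y1),(x2,y3)]"
    and ai: "HE r0 a \<in> path_edges ps"
  shows "good ps a (tproj_path ps a)"
proof -
  have pe: "path_edges ps = {VE x1 w | w. min y0 y1 \<le> w \<and> w < max y0 y1} \<union>
     {HE r y1 | r. min x1 x2 \<le> r \<and> r < max x1 x2} \<union> {VE x2 w | w. min y1 y3 \<le> w \<and> w < max y1 y3}"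
    unfolding ps path_edges4 using assms by (simp add: seg_h seg_v)
  have a: "a = y1" using ai unfolding pe by auto
  have "(THE i. row_seg ps a i) = 1"
    by (rule the_equality) (use assms a in \<open>auto simp: row_seg_def ps horiz_seg_def less_Suc_eq eval_nat_numeral\<close>)
  then have tp: "tproj_path ps a = (if x1 \<le> x2 then (((if y0 > y1 then TUp else TDown), x1), ((if y3 > y1 then TUp else TDown), x2))
      else (((if y3 > y1 then TUp else TDown), x2), ((if y0 > y1 then TUp else TDown), x1)))"
    unfolding tproj_path_def by (simp add: ps corner_type_def Let_def)
  show ?thesis
    unfolding good_def tp pe vdir_def using assms(1-3) a by (auto simp: min_def max_def)
qed



lemma hvh:
  assumes "x0 \<noteq> x1" "y1 \<noteq> y2" "x1 \<noteq> x3" and ps: "ps = [(x0,y1),(x1,y1),(x1,y2),(x3,y2)]"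
    and ai: "HE r0 a \<in> path_edges ps"
  shows "good ps a (tproj_path ps a)"
proof -
  have pe: "path_edges ps = {HE r y1 | r. min x0 x1 \<le> r \<and> r < max x0 x1} \<union>
     {VE x1 w | w. min y1 y2 \<le> w \<and> w < max y1 y2} \<union> {HE r y2 | r. min x1 x3 \<le> r \<and> r < max x1 x3}"
    unfolding ps path_edges4 using assms by (simp add: seg_h seg_v)
  have a: "a = y1 \<or> a = y2" using ai unfolding pe by auto
  then show ?thesis
  proof
    assume a: "a = y1"
    have "(THE i. row_seg ps a i) = 0"
      by (rule the_equality) (use assms a in \<open>auto simp: row_seg_def ps horiz_seg_def less_Suc_eq eval_nat_numeral\<close>)
    then have tp: "tproj_path ps a = (if x0 \<le> x1 then ((TEmpty, x0), ((if y2 > y1 then TUp else TDown), x1))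
        else (((if y2 > y1 then TUp else TDown), x1), (TEmpty, x0)))"
      unfolding tproj_path_def by (simp add: ps corner_type_def Let_def)
    show ?thesis
      unfolding good_def tp pe vdir_def using assms(1-3) a by (auto simp: min_def max_def)
  next
    assume a: "a = y2"
    have "(THE i. row_seg ps a i) = 2"
      by (rule the_equality) (use assms a in \<open>auto simp: row_seg_def ps horiz_seg_def less_Suc_eq eval_nat_numeral\<close>)
    then have tp: "tproj_path ps a = (if x1 \<le> x3 then (((if y1 > y2 then TUp else TDown), x1), (TEmpty, x3))
        else ((TEmpty, x3), ((if y1 > y2 then TUp else TDown), x1)))"
      unfolding tproj_path_def by (simp add: ps corner_type_def Let_def eval_nat_numeral)
    show ?thesis
      unfolding good_def tp pe vdir_def using assms(1-3) a by (auto simp: min_def max_def)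
  qed
qed

lemma good_path:
  assumes tb: "two_bend_path ps" and ai: "HE r0 a \<in> path_edges ps"
  shows "good ps a (tproj_path ps a)"
proof -
  from tb obtain p0 p1 p2 p3 where ps: "ps = [p0,p1,p2,p3]"
    unfolding two_bend_path_def using len4 by blast
  obtain x0 y0 where p0: "p0 = (x0,y0)" by (cases p0)
  obtain x1 y1 where p1: "p1 = (x1,y1)" by (cases p1)
  obtain x2 y2 where p2: "p2 = (x2,y2)" by (cases p2)
  obtain x3 y3 where p3: "p3 = (x3,y3)" by (cases p3)
  from tb consider
     (VHV) "x0 = x1" "y0 \<noteq> y1" "y1 = y2" "x1 \<noteq> x2" "x2 = x3" "y2 \<noteq> y3"
   | (HVH) "y0 = y1" "x0 \<noteq> x1" "x1 = x2" "y1 \<noteq> y2" "y2 = y3" "x2 \<noteq> x3"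
    unfolding two_bend_path_def ps p0 p1 p2 p3 horiz_seg_def vert_seg_def by auto
  then show ?thesis
  proof cases
    case VHV
    show ?thesis by (rule vhv[of y0 y1 x1 x2 y3 ps r0]) (use VHV ai in \<open>auto simp: ps p0 p1 p2 p3\<close>)
  next
    case HVH
    show ?thesis by (rule hvh[of x0 x1 y1 y2 x3 ps r0]) (use HVH ai in \<open>auto simp: ps p0 p1 p2 p3\<close>)
  qed
qed



lemma cg: "coherent_gen ((x,\<alpha>),(y,\<beta>)) (z,\<gamma>) e \<longleftrightarrow> (\<alpha> < \<gamma> \<and> \<gamma> < \<beta>) \<or>
  (z = TEmpty \<and> (\<exists>l. e = Some l \<and> \<alpha> \<le> l \<and> l + 1 \<le> \<beta>)) \<or> (z \<noteq> TEmpty \<and> ((z,\<gamma>) = (x,\<alpha>) \<or> (z,\<gamma>) = (y,\<beta>)))"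
  unfolding coherent_gen_def by simp

lemma inter_char:
  assumes "\<alpha> < \<beta>" "\<alpha>' \<le> \<beta>'"
  shows "tintersects ((x,\<alpha>),(y,\<beta>)) ((x',\<alpha>'),(y',\<beta>')) \<longleftrightarrow>
     max \<alpha> \<alpha>' < min \<beta> \<beta>' \<or>
     (x \<noteq> TEmpty \<and> ((x,\<alpha>) = (x',\<alpha>') \<or> (x,\<alpha>) = (y',\<beta>'))) \<or>
     (y \<noteq> TEmpty \<and> ((y,\<beta>) = (x',\<alpha>') \<or> (y,\<beta>) = (y',\<beta>'))) \<or>
     (\<alpha>' = \<beta>' \<and> \<alpha> < \<alpha>' \<and> \<alpha>' < \<beta>)" (is "?L \<longleftrightarrow> ?R")
proof
  assume ?L
  then consider "max \<alpha> \<alpha>' + 1 \<le> min \<beta> \<beta>'"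
    | "coherent_gen ((x,\<alpha>),(y,\<beta>)) (x',\<alpha>') (if \<alpha>' < \<beta>' then Some \<alpha>' else None)"
    | "coherent_gen ((x,\<alpha>),(y,\<beta>)) (y',\<beta>') (if \<alpha>' < \<beta>' then Some (\<beta>' - 1) else None)"
    | "coherent_gen ((x',\<alpha>'),(y',\<beta>')) (x,\<alpha>) (if \<alpha> < \<beta> then Some \<alpha> else None)"
    | "coherent_gen ((x',\<alpha>'),(y',\<beta>')) (y,\<beta>) (if \<alpha> < \<beta> then Some (\<beta> - 1) else None)"
    unfolding tintersects_def coherent_left_def coherent_right_def fst_conv snd_conv by blast
  then show ?R
  proof cases
    case 1 then show ?thesis by auto
  next
    case 2 then show ?thesis using assms unfolding cg by (auto split: if_splits)
  next
    case 3 then show ?thesis using assms unfolding cg by (auto split: if_splits)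
  next
    case 4 then show ?thesis using assms unfolding cg by (auto split: if_splits)
  next
    case 5 then show ?thesis using assms unfolding cg by (auto split: if_splits)
  qed
next
  assume ?R
  then consider "max \<alpha> \<alpha>' < min \<beta> \<beta>'"
    | "x \<noteq> TEmpty" "(x,\<alpha>) = (x',\<alpha>') \<or> (x,\<alpha>) = (y',\<beta>')"
    | "y \<noteq> TEmpty" "(y,\<beta>) = (x',\<alpha>') \<or> (y,\<beta>) = (y',\<beta>')"
    | "\<alpha>' = \<beta>'" "\<alpha> < \<alpha>'" "\<alpha>' < \<beta>" by blast
  then show ?L
  proof cases
    case 1 then show ?thesis unfolding tintersects_def by auto
  next
    case 2 then show ?thesis unfolding tintersects_def coherent_left_def coherent_right_def by (auto simp: cg)
  next
    case 3 then show ?thesis unfolding tintersects_def coherent_left_def coherent_right_def by (auto simp: cg)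
  next
    case 4 then show ?thesis unfolding tintersects_def coherent_left_def coherent_right_def by (auto simp: cg)
  qed
qed

lemma adj:
  assumes gu: "good pu a ((xu,\<alpha>u),(yu,\<beta>u))" and gv: "good pv a ((xv,\<alpha>v),(yv,\<beta>v))"
    and rows: "\<And>r w. HE r w \<in> path_edges pu \<Longrightarrow> HE r w \<in> path_edges pv \<Longrightarrow> w = a"
  shows "path_edges pu \<inter> path_edges pv \<noteq> {} \<longleftrightarrow> tintersects ((xu,\<alpha>u),(yu,\<beta>u)) ((xv,\<alpha>v),(yv,\<beta>v))"
proof -
  have lu: "\<alpha>u < \<beta>u" and lv: "\<alpha>v < \<beta>v" using gu gv unfolding good_def by auto
  have ch: "tintersects ((xu,\<alpha>u),(yu,\<beta>u)) ((xv,\<alpha>v),(yv,\<beta>v)) \<longleftrightarrow>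
     max \<alpha>u \<alpha>v < min \<beta>u \<beta>v \<or>
     (xu \<noteq> TEmpty \<and> ((xu,\<alpha>u) = (xv,\<alpha>v) \<or> (xu,\<alpha>u) = (yv,\<beta>v))) \<or>
     (yu \<noteq> TEmpty \<and> ((yu,\<beta>u) = (xv,\<alpha>v) \<or> (yu,\<beta>u) = (yv,\<beta>v)))"
    using inter_char[OF lu, of \<alpha>v \<beta>v xu yu xv yv] lv by auto
  show ?thesis
  proof
    assume "path_edges pu \<inter> path_edges pv \<noteq> {}"
    then obtain e where eu: "e \<in> path_edges pu" and ev: "e \<in> path_edges pv" by blast
    show "tintersects ((xu,\<alpha>u),(yu,\<beta>u)) ((xv,\<alpha>v),(yv,\<beta>v))"
    proof (cases e)
      case (HE r w)
      then have "w = a" using rows eu ev by auto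
      then have "\<alpha>u \<le> r \<and> r < \<beta>u" "\<alpha>v \<le> r \<and> r < \<beta>v"
        using gu gv eu ev HE unfolding good_def by auto
      then show ?thesis unfolding ch by auto
    next
      case (VE g w)
      have A: "(g = \<alpha>u \<and> vdir xu a w) \<or> (g = \<beta>u \<and> vdir yu a w)"
        using gu eu VE unfolding good_def by auto
      have B: "(g = \<alpha>v \<and> vdir xv a w) \<or> (g = \<beta>v \<and> vdir yv a w)"
        using gv ev VE unfolding good_def by auto
      show ?thesis unfolding ch using A B unfolding vdir_def by auto
    qed
  next
    assume "tintersects ((xu,\<alpha>u),(yu,\<beta>u)) ((xv,\<alpha>v),(yv,\<beta>v))"
    then consider (e) "max \<alpha>u \<alpha>v < min \<beta>u \<beta>v"
      | (l) "xu \<noteq> TEmpty" "(xu,\<alpha>u) = (xv,\<alpha>v) \<or> (xu,\<alpha>u) = (yv,\<beta>v)"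
      | (r) "yu \<noteq> TEmpty" "(yu,\<beta>u) = (xv,\<alpha>v) \<or> (yu,\<beta>u) = (yv,\<beta>v)"
      unfolding ch by blast
    then show "path_edges pu \<inter> path_edges pv \<noteq> {}"
    proof cases
      case e
      then have "HE (max \<alpha>u \<alpha>v) a \<in> path_edges pu" "HE (max \<alpha>u \<alpha>v) a \<in> path_edges pv"
        using gu gv unfolding good_def by auto
      then show ?thesis by blast
    next
      case l
      then show ?thesis using gu gv unfolding good_def by (cases xu) auto
    next
      case r
      then show ?thesis using gu gv unfolding good_def by (cases yu) auto
    qed
  qed
qed



abbreviation lo :: "tint \<Rightarrow> int" where "lo v \<equiv> snd (fst v)"
abbreviation hi :: "tint \<Rightarrow> int" where "hi v \<equiv> snd (snd v)"
abbreviation tyl :: "tint \<Rightarrow> ttype" where "tyl v \<equiv> fst (fst v)"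
abbreviation tyr :: "tint \<Rightarrow> ttype" where "tyr v \<equiv> fst (snd v)"

lemma inter_char':
  assumes "lo s < hi s" "lo v \<le> hi v"
  shows "tintersects s v \<longleftrightarrow> max (lo s) (lo v) < min (hi s) (hi v) \<or>
     (tyl s \<noteq> TEmpty \<and> (fst s = fst v \<or> fst s = snd v)) \<or>
     (tyr s \<noteq> TEmpty \<and> (snd s = fst v \<or> snd s = snd v)) \<or>
     (lo v = hi v \<and> lo s < lo v \<and> lo v < hi s)"
proof -
  obtain x \<alpha> y \<beta> where s: "s = ((x,\<alpha>),(y,\<beta>))" by (metis prod.collapse)
  obtain x' \<alpha>' y' \<beta>' where v: "v = ((x',\<alpha>'),(y',\<beta>'))" by (metis prod.collapse)
  show ?thesis using inter_char[of \<alpha> \<beta> \<alpha>' \<beta>' x y x' y'] assms unfolding s v by simp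
qed

lemma tint_sym: "tintersects s v = tintersects v s"
  unfolding tintersects_def by (auto simp: max.commute min.commute)

lemma touch:
  assumes "lo s < hi s" "lo v < hi v" "hi s \<le> lo v" "tintersects s v"
  shows "snd s = fst v \<and> tyl v \<noteq> TEmpty"
proof -
  have "max (lo s) (lo v) < min (hi s) (hi v) \<or>
     (tyl s \<noteq> TEmpty \<and> (fst s = fst v \<or> fst s = snd v)) \<or>
     (tyr s \<noteq> TEmpty \<and> (snd s = fst v \<or> snd s = snd v)) \<or>
     (lo v = hi v \<and> lo s < lo v \<and> lo v < hi s)"
    using inter_char'[of s v] assms by auto
  then show ?thesis using assms by (auto simp: prod_eq_iff)
qed

lemma helly1d:
  assumes fin: "finite S" and ne: "S \<noteq> {}" and nd: "\<forall>v\<in>S. lo v < hi v"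
    and pw: "\<forall>v\<in>S. \<forall>w\<in>S. v \<noteq> w \<longrightarrow> tintersects v w"
  shows "\<exists>t. proper t \<and> (\<forall>v\<in>S. tcontains v t) \<and>
     (\<forall>s. lo s < hi s \<longrightarrow> ((\<forall>v\<in>S. tintersects s v) \<longleftrightarrow> tintersects s t))"
proof -
  define A where "A = Max (lo ` S)"
  define B where "B = Min (hi ` S)"
  have Ale: "\<And>v. v \<in> S \<Longrightarrow> lo v \<le> A" unfolding A_def using fin by auto
  have Bge: "\<And>v. v \<in> S \<Longrightarrow> B \<le> hi v" unfolding B_def using fin by auto
  have "A \<in> lo ` S" unfolding A_def using fin ne by (intro Max_in) auto
  then obtain v1 where v1: "v1 \<in> S" "lo v1 = A" by auto
  have "B \<in> hi ` S" unfolding B_def using fin ne by (intro Min_in) auto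
  then obtain v2 where v2: "v2 \<in> S" "hi v2 = B" by auto
  define L where "L = {v\<in>S. lo v = A}"
  define R where "R = {v\<in>S. hi v = B}"
  define Px where "Px = (\<exists>z. z \<noteq> TEmpty \<and> (\<forall>v\<in>L. tyl v = z))"
  define x where "x = (if Px then (SOME z. z \<noteq> TEmpty \<and> (\<forall>v\<in>L. tyl v = z)) else TEmpty)"
  define Py where "Py = (\<exists>z. z \<noteq> TEmpty \<and> (\<forall>v\<in>R. tyr v = z))"
  define y where "y = (if Py then (SOME z. z \<noteq> TEmpty \<and> (\<forall>v\<in>R. tyr v = z)) else TEmpty)"
  have xP: "Px \<Longrightarrow> x \<noteq> TEmpty \<and> (\<forall>v\<in>L. tyl v = x)"
  proof -
    assume p: "Px"
    then have xe: "x = (SOME z. z \<noteq> TEmpty \<and> (\<forall>v\<in>L. tyl v = z))" unfolding x_def by (simp only: if_True)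
    show ?thesis unfolding xe by (rule someI_ex) (use p in \<open>unfold Px_def\<close>)
  qed
  have xL: "\<And>v. x \<noteq> TEmpty \<Longrightarrow> v \<in> L \<Longrightarrow> tyl v = x"
  proof -
    fix v assume xn: "x \<noteq> TEmpty" and vL: "v \<in> L"
    have "Px" proof (rule ccontr)
      assume "\<not> Px" then have "x = TEmpty" unfolding x_def by (simp only: if_False)
      with xn show False by contradiction
    qed
    with xP vL show "tyl v = x" by blast
  qed
  have xI: "\<And>z. z \<noteq> TEmpty \<Longrightarrow> \<forall>v\<in>L. tyl v = z \<Longrightarrow> x = z"
  proof -
    fix z assume z: "z \<noteq> TEmpty" "\<forall>v\<in>L. tyl v = z"
    then have "Px" unfolding Px_def by blast
    with xP have "\<forall>v\<in>L. tyl v = x" by blast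
    moreover have "v1 \<in> L" using v1 unfolding L_def by blast
    ultimately show "x = z" using z by metis
  qed
  have yP: "Py \<Longrightarrow> y \<noteq> TEmpty \<and> (\<forall>v\<in>R. tyr v = y)"
  proof -
    assume p: "Py"
    then have xe: "y = (SOME z. z \<noteq> TEmpty \<and> (\<forall>v\<in>R. tyr v = z))" unfolding y_def by (simp only: if_True)
    show ?thesis unfolding xe by (rule someI_ex) (use p in \<open>unfold Py_def\<close>)
  qed
  have yR: "\<And>v. y \<noteq> TEmpty \<Longrightarrow> v \<in> R \<Longrightarrow> tyr v = y"
  proof -
    fix v assume xn: "y \<noteq> TEmpty" and vL: "v \<in> R"
    have "Py" proof (rule ccontr)
      assume "\<not> Py" then have "y = TEmpty" unfolding y_def by (simp only: if_False)
      with xn show False by contradiction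
    qed
    with yP vL show "tyr v = y" by blast
  qed
  have yI: "\<And>z. z \<noteq> TEmpty \<Longrightarrow> \<forall>v\<in>R. tyr v = z \<Longrightarrow> y = z"
  proof -
    fix z assume z: "z \<noteq> TEmpty" "\<forall>v\<in>R. tyr v = z"
    then have "Py" unfolding Py_def by blast
    with yP have "\<forall>v\<in>R. tyr v = y" by blast
    moreover have "v2 \<in> R" using v2 unfolding R_def by blast
    ultimately show "y = z" using z by metis
  qed
  have AB: "A \<le> B"
  proof (rule ccontr)
    assume "\<not> A \<le> B"
    then have "v2 \<noteq> v1" using v1 v2 nd by auto
    then have "tintersects v2 v1" using pw v1 v2 by auto
    from touch[OF _ _ _ this] v1 v2 nd \<open>\<not> A \<le> B\<close> show False by (auto simp: prod_eq_iff)
  qed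
  have eqc: "A = B \<Longrightarrow> x \<noteq> TEmpty \<and> y = x \<and> (\<forall>v\<in>L. tyl v = x) \<and> (\<forall>v\<in>R. tyr v = x)"
  proof -
    assume AB': "A = B"
    have tw: "tyr w = tyl v \<and> tyl v \<noteq> TEmpty" if "v \<in> L" "w \<in> R" for v w
    proof -
      have "w \<noteq> v" using that nd AB' unfolding L_def R_def by auto
      then have "tintersects w v" using pw that unfolding L_def R_def by auto
      moreover have "lo w < hi w" "lo v < hi v" "hi w \<le> lo v" using nd that AB' unfolding L_def R_def by auto
      ultimately have "snd w = fst v \<and> tyl v \<noteq> TEmpty" using touch by blast
      then show ?thesis by (simp add: prod_eq_iff)
    qed
    have v1L: "v1 \<in> L" and v2R: "v2 \<in> R" using v1 v2 unfolding L_def R_def by auto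
    define z where "z = tyl v1"
    have zL: "\<forall>v\<in>L. tyl v = z" using tw v2R unfolding z_def by (metis v1L)
    have zR: "\<forall>v\<in>R. tyr v = z" using tw v1L unfolding z_def by blast
    have zn: "z \<noteq> TEmpty" using tw v1L v2R unfolding z_def by blast
    show ?thesis using xI[OF zn zL] yI[OF zn zR] zL zR zn by auto
  qed
  define t where "t = ((x,A),(y,B))"
  have proper: "proper t"
    unfolding proper_def typed_interval_def t_def using AB eqc by auto
  have cont: "tcontains v t" if vS: "v \<in> S" for v
  proof -
    have lv: "lo v \<le> A" "B \<le> hi v" "lo v < hi v" using Ale Bge nd vS by auto
    have cl: "coherent_gen v (x,A) (if A < B then Some A else None)"
    proof (cases "lo v < A \<and> A < hi v")
      case True then show ?thesis unfolding coherent_gen_def by (auto simp: case_prod_beta)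
    next
      case False
      show ?thesis
      proof (cases "lo v = A")
        case True
        then have vL: "v \<in> L" using vS unfolding L_def by auto
        show ?thesis
        proof (cases "x = TEmpty")
          case True
          then have "A < B" using eqc AB by force
          then show ?thesis using True lv \<open>lo v = A\<close> unfolding coherent_gen_def by (auto simp: case_prod_beta)
        next
          case False
          then have "tyl v = x" using xL vL by auto
          then show ?thesis using False \<open>lo v = A\<close> unfolding coherent_gen_def by (auto simp: case_prod_beta prod_eq_iff)
        qed
      next
        case False
        then have "hi v = A" "A = B" using \<open>\<not> (lo v < A \<and> A < hi v)\<close> lv AB by auto
        then have "v \<in> R" using vS unfolding R_def by auto
        then have "tyr v = x" "x \<noteq> TEmpty" using eqc \<open>A = B\<close> by auto
        then show ?thesis using \<open>hi v = A\<close> unfolding coherent_gen_def by (auto simp: case_prod_beta prod_eq_iff)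
      qed
    qed
    have cr: "coherent_gen v (y,B) (if A < B then Some (B - 1) else None)"
    proof (cases "lo v < B \<and> B < hi v")
      case True then show ?thesis unfolding coherent_gen_def by (auto simp: case_prod_beta)
    next
      case False
      show ?thesis
      proof (cases "hi v = B")
        case True
        then have vR: "v \<in> R" using vS unfolding R_def by auto
        show ?thesis
        proof (cases "y = TEmpty")
          case True
          then have "A < B" using eqc AB by force
          then show ?thesis using True lv \<open>hi v = B\<close> unfolding coherent_gen_def by (auto simp: case_prod_beta)
        next
          case False
          then have "tyr v = y" using yR vR by auto
          then show ?thesis using False \<open>hi v = B\<close> unfolding coherent_gen_def by (auto simp: case_prod_beta prod_eq_iff)
        qed
      next
        case False
        then have "lo v = B" "A = B" using \<open>\<not> (lo v < B \<and> B < hi v)\<close> lv AB by auto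
        then have "v \<in> L" using vS unfolding L_def by auto
        then have "tyl v = y" "y \<noteq> TEmpty" using eqc \<open>A = B\<close> by auto
        then show ?thesis using \<open>lo v = B\<close> unfolding coherent_gen_def by (auto simp: case_prod_beta prod_eq_iff)
      qed
    qed
    show ?thesis unfolding tcontains_def coherent_left_def coherent_right_def t_def
      using lv cl cr by (cases "A < B") simp_all
  qed
  have inter: "(\<forall>v\<in>S. tintersects s v) \<longleftrightarrow> tintersects s t" if ls: "lo s < hi s" for s
  proof
    assume all: "\<forall>v\<in>S. tintersects s v"
    have tch: "max (lo s) A < min (hi s) B \<or>
     (tyl s \<noteq> TEmpty \<and> (fst s = (x,A) \<or> fst s = (y,B))) \<or>
     (tyr s \<noteq> TEmpty \<and> (snd s = (x,A) \<or> snd s = (y,B))) \<or>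
     (A = B \<and> lo s < A \<and> A < hi s) \<Longrightarrow> tintersects s t"
      using inter_char'[of s t] ls AB unfolding t_def by auto
    show "tintersects s t"
    proof (cases "hi s \<le> A")
      case True
      have "snd s = fst v \<and> tyl v \<noteq> TEmpty" if "v \<in> L" for v
        using touch[of s v] that all ls True nd unfolding L_def by auto
      then have "\<forall>v\<in>L. tyl v = tyr s" "tyr s \<noteq> TEmpty" "hi s = A"
        using v1 unfolding L_def by (auto simp: prod_eq_iff)
      then have "x = tyr s" "hi s = A" using xI by auto
      then show ?thesis using tch \<open>tyr s \<noteq> TEmpty\<close> by (auto simp: prod_eq_iff)
    next
      case False
      show ?thesis
      proof (cases "B \<le> lo s")
        case True
        have "snd v = fst s \<and> tyl s \<noteq> TEmpty" if "v \<in> R" for v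
        proof -
          have vS: "v \<in> S" "hi v = B" using that unfolding R_def by auto
          have "tintersects v s" using all vS(1) tint_sym by metis
          then show ?thesis using touch[of v s] nd vS ls True by auto
        qed
        then have "\<forall>v\<in>R. tyr v = tyl s" "tyl s \<noteq> TEmpty" "lo s = B"
          using v2 unfolding R_def by (auto simp: prod_eq_iff)
        then have "y = tyl s" "lo s = B" using yI by auto
        then show ?thesis using tch \<open>tyl s \<noteq> TEmpty\<close> by (auto simp: prod_eq_iff)
      next
        case False
        then show ?thesis using tch \<open>\<not> hi s \<le> A\<close> AB ls by (cases "A = B") auto
      qed
    qed
  next
    assume st: "tintersects s t"
    have "max (lo s) A < min (hi s) B \<or>
     (tyl s \<noteq> TEmpty \<and> (fst s = (x,A) \<or> fst s = (y,B))) \<or>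
     (tyr s \<noteq> TEmpty \<and> (snd s = (x,A) \<or> snd s = (y,B))) \<or>
     (A = B \<and> lo s < A \<and> A < hi s)"
      using inter_char'[of s t] ls AB st unfolding t_def by auto
    then consider (e) "max (lo s) A < min (hi s) B" | (d) "A = B" "lo s < A" "A < hi s"
      | (xa) "x \<noteq> TEmpty" "fst s = (x,A) \<or> snd s = (x,A)"
      | (yb) "y \<noteq> TEmpty" "fst s = (y,B) \<or> snd s = (y,B)"
      by auto
    then show "\<forall>v\<in>S. tintersects s v"
    proof cases
      case e
      show ?thesis
      proof
        fix v assume vS: "v \<in> S"
        show "tintersects s v" using inter_char'[of s v] ls nd vS Ale[OF vS] Bge[OF vS] e by auto
      qed
    next
      case d
      show ?thesis
      proof
        fix v assume vS: "v \<in> S"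
        show "tintersects s v" using inter_char'[of s v] ls nd vS Ale[OF vS] Bge[OF vS] d by auto
      qed
    next
      case xa
      show ?thesis
      proof
        fix v assume vS: "v \<in> S"
        have lv: "lo v \<le> A" "B \<le> hi v" "lo v < hi v" using Ale Bge nd vS by auto
        have ch: "tintersects s v \<longleftrightarrow> max (lo s) (lo v) < min (hi s) (hi v) \<or>
         (tyl s \<noteq> TEmpty \<and> (fst s = fst v \<or> fst s = snd v)) \<or>
         (tyr s \<noteq> TEmpty \<and> (snd s = fst v \<or> snd s = snd v))"
          using inter_char'[of s v] ls lv by auto
        show "tintersects s v"
        proof (cases "lo v = A")
          case True
          then have "tyl v = x" using xL xa vS unfolding L_def by auto
          then have "fst v = (x,A)" using True by (simp add: prod_eq_iff)
          then show ?thesis unfolding ch using xa by auto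
        next
          case False
          show ?thesis
          proof (cases "A < hi v")
            case True
            then show ?thesis unfolding ch using xa False lv ls by (auto simp: prod_eq_iff)
          next
            case False
            then have "hi v = A" "A = B" using lv AB by auto
            then have "v \<in> R" using vS unfolding R_def by auto
            then have "tyr v = x" using eqc \<open>A = B\<close> by blast
            then have "snd v = (x,A)" using \<open>hi v = A\<close> by (simp add: prod_eq_iff)
            then show ?thesis unfolding ch using xa by auto
          qed
        qed
      qed
    next
      case yb
      show ?thesis
      proof
        fix v assume vS: "v \<in> S"
        have lv: "lo v \<le> A" "B \<le> hi v" "lo v < hi v" using Ale Bge nd vS by auto
        have ch: "tintersects s v \<longleftrightarrow> max (lo s) (lo v) < min (hi s) (hi v) \<or>
         (tyl s \<noteq> TEmpty \<and> (fst s = fst v \<or> fst s = snd v)) \<or>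
         (tyr s \<noteq> TEmpty \<and> (snd s = fst v \<or> snd s = snd v))"
          using inter_char'[of s v] ls lv by auto
        show "tintersects s v"
        proof (cases "hi v = B")
          case True
          then have "tyr v = y" using yR yb vS unfolding R_def by auto
          then have "snd v = (y,B)" using True by (simp add: prod_eq_iff)
          then show ?thesis unfolding ch using yb by auto
        next
          case False
          show ?thesis
          proof (cases "lo v < B")
            case True
            then show ?thesis unfolding ch using yb False lv ls by (auto simp: prod_eq_iff)
          next
            case False
            then have "lo v = B" "A = B" using lv AB by auto
            then have "v \<in> L" using vS unfolding L_def by auto
            then have "tyl v = y" using eqc \<open>A = B\<close> by metis
            then have "fst v = (y,B)" using \<open>lo v = B\<close> by (simp add: prod_eq_iff)
            then show ?thesis unfolding ch using yb by auto
          qed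
        qed
      qed
    qed
  qed
  show ?thesis using proper cont inter by blast
qed


lemma adj':
  assumes "good pu a tu" "good pv a tv"
    and "\<And>r w. HE r w \<in> path_edges pu \<Longrightarrow> HE r w \<in> path_edges pv \<Longrightarrow> w = a"
  shows "path_edges pu \<inter> path_edges pv \<noteq> {} \<longleftrightarrow> tintersects tu tv"
proof -
  obtain x \<alpha> y \<beta> where s: "tu = ((x,\<alpha>),(y,\<beta>))" by (metis prod.collapse)
  obtain x' \<alpha>' y' \<beta>' where v: "tv = ((x',\<alpha>'),(y',\<beta>'))" by (metis prod.collapse)
  show ?thesis using adj[of pu a x \<alpha> y \<beta> pv x' \<alpha>' y' \<beta>'] assms unfolding s v by blast
qed

lemma good_lohi: "good ps a t \<Longrightarrow> lo t < hi t"
  unfolding good_def by blast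

theorem lemma4:
  fixes V :: "'v set" and E :: "'v \<Rightarrow> 'v \<Rightarrow> bool" and P :: "'v \<Rightarrow> point list"
    and Y :: "'v set" and a :: int
  assumes "finite V"
    and "B2_EPG_rep V E P"
    and "Y \<subseteq> V" and "Y \<noteq> {}"
    and "\<forall>v\<in>Y. a \<in> index P v"
    and "proj_clique P Y a"
  shows "\<exists>t. proper t \<and>
           (\<forall>v\<in>Y. tcontains (tproj P v a) t) \<and>
           (\<forall>u\<in>V. (index P u = {a} \<or> (\<exists>c. index P u = {a, c} \<and> (\<forall>v\<in>Y. c \<notin> index P v))) \<longrightarrow>
              ((\<forall>v\<in>Y. v \<noteq> u \<longrightarrow> E u v) \<longleftrightarrow> tintersects (tproj P u a) t))"
proof -
  have tbp: "\<And>u. u \<in> V \<Longrightarrow> two_bend_path (P u)" using assms(2) unfolding B2_EPG_rep_def by blast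
  have Ed: "\<And>u v. u \<in> V \<Longrightarrow> v \<in> V \<Longrightarrow> E u v \<longleftrightarrow> u \<noteq> v \<and> path_edges (P u) \<inter> path_edges (P v) \<noteq> {}"
    using assms(2) unfolding B2_EPG_rep_def by blast
  have gd: "good (P u) a (tproj P u a)" if uV0: "u \<in> V" and ai0: "a \<in> index P u" for u
  proof -
    obtain r where "HE r a \<in> path_edges (P u)" using ai0 unfolding index_def by blast
    then show ?thesis unfolding tproj_def using good_path[OF tbp[OF uV0]] by blast
  qed
  define S where "S = (\<lambda>v. tproj P v a) ` Y"
  have fin: "finite S" unfolding S_def using assms(1,3) finite_subset by blast
  have ne: "S \<noteq> {}" unfolding S_def using assms(4) by blast
  have nd: "\<forall>v\<in>S. lo v < hi v" unfolding S_def using gd good_lohi assms(3,5) by blast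
  have pw: "\<forall>v\<in>S. \<forall>w\<in>S. v \<noteq> w \<longrightarrow> tintersects v w"
  proof (intro ballI impI)
    fix v w assume vw: "v \<in> S" "w \<in> S" "v \<noteq> w"
    then obtain v' w' where "v' \<in> Y" "w' \<in> Y" "v = tproj P v' a" "w = tproj P w' a" unfolding S_def by blast
    moreover then have "v' \<noteq> w'" using vw(3) by auto
    ultimately show "tintersects v w" using assms(6) unfolding proj_clique_def by simp
  qed
  obtain t where t1: "proper t" and t2: "\<forall>v\<in>S. tcontains v t"
     and t3: "\<forall>s. lo s < hi s \<longrightarrow> ((\<forall>v\<in>S. tintersects s v) \<longleftrightarrow> tintersects s t)"
    using helly1d[OF fin ne nd pw] by blast
  have part2: "(\<forall>v\<in>Y. v \<noteq> u \<longrightarrow> E u v) \<longleftrightarrow> tintersects (tproj P u a) t"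
    if uV: "u \<in> V" and ic: "index P u = {a} \<or> (\<exists>c. index P u = {a, c} \<and> (\<forall>v\<in>Y. c \<notin> index P v))" for u
  proof -
    have ai: "a \<in> index P u" using ic by blast
    have gu: "good (P u) a (tproj P u a)" using gd uV ai by blast
    have lu: "lo (tproj P u a) < hi (tproj P u a)" using good_lohi[OF gu] .
    have each: "(v \<noteq> u \<longrightarrow> E u v) \<longleftrightarrow> tintersects (tproj P u a) (tproj P v a)" if vY: "v \<in> Y" for v
    proof (cases "v = u")
      case True
      have "tintersects (tproj P u a) (tproj P u a)" using inter_char'[of "tproj P u a" "tproj P u a"] lu by auto
      then show ?thesis using True by simp
    next
      case False
      have vV: "v \<in> V" using vY assms(3) by blast
      have gv: "good (P v) a (tproj P v a)" using gd vV assms(5) vY by blast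
      have rows: "w = a" if "HE r w \<in> path_edges (P u)" "HE r w \<in> path_edges (P v)" for r w
      proof -
        have "w \<in> index P u" "w \<in> index P v" using that unfolding index_def by blast+
        then show ?thesis using ic vY by blast
      qed
      show ?thesis using Ed[OF uV vV] adj'[OF gu gv rows] False by auto
    qed
    have "(\<forall>v\<in>Y. v \<noteq> u \<longrightarrow> E u v) \<longleftrightarrow> (\<forall>w\<in>S. tintersects (tproj P u a) w)"
      unfolding S_def using each by auto
    also have "\<dots> \<longleftrightarrow> tintersects (tproj P u a) t" using t3 lu by blast
    finally show ?thesis .
  qed
  show ?thesis using t1 t2 part2 unfolding S_def by blast
qed

end
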